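(* Let $0<p\leq 1$ be a fixed constant and let $G\sim G(n,p)$, with $n$ sufficiently large. Then with high probability there exists a partition $V(G)=V_1\cup\cdots\cup V_t$ into disjoint subsets such that for all $1\leq i\leq t$: (i) $G[V_i]$ is a clique; (ii) $|V_i|=\Theta(\ln^{1/3} n)$; (iii) $|V_i|$ is even for all $1\leq i\leq t-1$.
   Context: $G(n,p)$ is the binomial random graph on $n$ vertices with each edge present independently with probability $p$. "With high probability" means with probability tending to $1$ as $n\to\infty$. $G[S]$ denotes the subgraph induced on $S$. *)

theory Defs
  imports "HOL-Probability.Probability"
begin

text \<open>Binomial random graph G(n,p) on vertex set {0..<n}: a graph is represented by
  its edge indicator on the slots (i,j) with i<j<n; each slot is present independently
  with probability p.\<close>

definition edge_slots :: "nat \<Rightarrow> (nat \<times> nat) set" where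
  "edge_slots n = {(i, j). i < j \<and> j < n}"

definition gnp :: "nat \<Rightarrow> real \<Rightarrow> (nat \<times> nat \<Rightarrow> bool) pmf" where
  "gnp n p = Pi_pmf (edge_slots n) False (\<lambda>_. bernoulli_pmf p)"

definition adj :: "(nat \<times> nat \<Rightarrow> bool) \<Rightarrow> nat \<Rightarrow> nat \<Rightarrow> bool" where
  "adj G u v \<longleftrightarrow> u \<noteq> v \<and> G (min u v, max u v)"

definition is_clique :: "(nat \<times> nat \<Rightarrow> bool) \<Rightarrow> nat set \<Rightarrow> bool" where
  "is_clique G S \<longleftrightarrow> (\<forall>u\<in>S. \<forall>v\<in>S. u \<noteq> v \<longrightarrow> adj G u v)"

definition is_partition :: "nat \<Rightarrow> nat set list \<Rightarrow> bool" where
  "is_partition n Vs \<longleftrightarrow>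
     (\<forall>i<length Vs. Vs ! i \<noteq> {}) \<and>
     (\<forall>i<length Vs. \<forall>j<length Vs. i \<noteq> j \<longrightarrow> Vs ! i \<inter> Vs ! j = {}) \<and>
     \<Union>(set Vs) = {0..<n}"

end

theory Submission
  imports Defs "HOL-Real_Asymp.Real_Asymp"
begin


lemma prob_none_all:
  fixes A :: "'a set" and E :: "'i \<Rightarrow> 'a set" and I :: "'i set" and p :: real
  assumes "finite I" "finite A" "\<forall>l\<in>I. E l \<subseteq> A"
    "\<forall>l\<in>I. \<forall>l'\<in>I. l \<noteq> l' \<longrightarrow> E l \<inter> E l' = {}"
    "\<forall>l\<in>I. card (E l) \<le> M" "0 \<le> p" "p \<le> 1"
  shows "measure_pmf.prob (Pi_pmf A False (\<lambda>_. bernoulli_pmf p))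
           {f. \<forall>l\<in>I. \<not>(\<forall>e\<in>E l. f e)} \<le> (1 - p ^ M) ^ card I"
  using assms
proof (induction I arbitrary: A rule: finite_induct)
  case empty
  then show ?case by simp
next
  case (insert l I)
  let ?P = "\<lambda>X. Pi_pmf X False (\<lambda>_. bernoulli_pmf p)"
  have El: "E l \<subseteq> A" using insert.prems(2) by simp
  have finE: "finite (E l)" using El insert.prems(1) finite_subset by blast
  have AU: "A = E l \<union> (A - E l)" using El by blast
  let ?h = "\<lambda>(f,g) x. if x \<in> E l then f x else (g x :: bool)"
  have PA: "?P A = map_pmf ?h (pair_pmf (?P (E l)) (?P (A - E l)))"
  proof -
    have "?P (E l \<union> (A - E l)) = map_pmf ?h (pair_pmf (?P (E l)) (?P (A - E l)))"
      by (rule Pi_pmf_union) (use finE insert.prems(1) in auto)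
    then show ?thesis using AU by simp
  qed
  define S1 where "S1 = {f. \<not>(\<forall>e\<in>E l. f e)}"
  define S2 where "S2 = {f. \<forall>l\<in>I. \<not>(\<forall>e\<in>E l. f e)}"
  have disj: "\<forall>l'\<in>I. E l' \<subseteq> A - E l"
  proof
    fix l' assume l': "l' \<in> I"
    then have "l' \<noteq> l" using insert.hyps(2) by auto
    then have "E l \<inter> E l' = {}" using insert.prems(3) l' by simp
    moreover have "E l' \<subseteq> A" using insert.prems(2) l' by simp
    ultimately show "E l' \<subseteq> A - E l" by auto
  qed
  have pre: "?h -` {f. \<forall>l\<in>insert l I. \<not>(\<forall>e\<in>E l. f e)} = S1 \<times> S2"
  proof (rule set_eqI)
    fix z :: "('a \<Rightarrow> bool) \<times> ('a \<Rightarrow> bool)"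
    obtain f g where z: "z = (f,g)" by fastforce
    have h1: "\<forall>e\<in>E l. ?h (f,g) e = f e" by simp
    have h2: "\<forall>l'\<in>I. \<forall>e\<in>E l'. ?h (f,g) e = g e" using disj by auto
    have "(\<forall>l'\<in>I. \<not>(\<forall>e\<in>E l'. ?h (f,g) e)) = (\<forall>l'\<in>I. \<not>(\<forall>e\<in>E l'. g e))"
      using h2 by (metis (no_types, lifting))
    moreover have "(\<not>(\<forall>e\<in>E l. ?h (f,g) e)) = (\<not>(\<forall>e\<in>E l. f e))"
      using h1 by (metis (no_types, lifting))
    ultimately show "z \<in> ?h -` {f. \<forall>l\<in>insert l I. \<not>(\<forall>e\<in>E l. f e)} \<longleftrightarrow> z \<in> S1 \<times> S2"
      unfolding z S1_def S2_def by (simp only: vimage_eq mem_Collect_eq ball_insert mem_Times_iff fst_conv snd_conv)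
  qed
  let ?M1 = "?P (E l)" and ?M2 = "?P (A - E l)"
  have "measure_pmf.prob (?P A) {f. \<forall>l\<in>insert l I. \<not>(\<forall>e\<in>E l. f e)}
      = measure_pmf.prob (pair_pmf ?M1 ?M2) (S1 \<times> S2)"
    by (simp only: PA measure_map_pmf pre)
  also have "\<dots> = measure_pmf.prob (pair_pmf ?M1 ?M2) ((S1 \<times> S2) \<inter> set_pmf (pair_pmf ?M1 ?M2))"
    by (rule measure_Int_set_pmf[symmetric])
  also have "(S1 \<times> S2) \<inter> set_pmf (pair_pmf ?M1 ?M2) = (S1 \<inter> set_pmf ?M1) \<times> (S2 \<inter> set_pmf ?M2)"
    by auto
  also have "measure_pmf.prob (pair_pmf ?M1 ?M2) \<dots> = measure_pmf.prob ?M1 (S1 \<inter> set_pmf ?M1) * measure_pmf.prob ?M2 (S2 \<inter> set_pmf ?M2)"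
    by (rule measure_pmf_prob_product) (auto intro: countable_subset)
  also have "\<dots> = measure_pmf.prob ?M1 S1 * measure_pmf.prob ?M2 S2"
    by (simp add: measure_Int_set_pmf)
  finally have eq: "measure_pmf.prob (?P A) {f. \<forall>l\<in>insert l I. \<not>(\<forall>e\<in>E l. f e)} = measure_pmf.prob ?M1 S1 * measure_pmf.prob ?M2 S2" .
  have IH: "measure_pmf.prob ?M2 S2 \<le> (1 - p ^ M) ^ card I"
    unfolding S2_def
    apply (rule insert.IH)
    using insert.prems disj by auto
  have allE: "measure_pmf.prob ?M1 (Pi (E l) (\<lambda>_. {True})) = p ^ card (E l)"
    using measure_Pi_pmf_Pi[of "E l" False "\<lambda>_. bernoulli_pmf p" "\<lambda>_. {True}"] finE insert.prems
    by (simp add: measure_pmf_single)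
  have S1c: "S1 = UNIV - Pi (E l) (\<lambda>_. {True})" unfolding S1_def by (auto simp: Pi_def)
  have m1: "measure_pmf.prob ?M1 S1 = 1 - p ^ card (E l)"
    unfolding S1c using measure_pmf.prob_compl[of "Pi (E l) (\<lambda>_. {True})" ?M1] allE by simp
  have "p ^ M \<le> p ^ card (E l)"
    using insert.prems by (intro power_decreasing) auto
  then have m1': "measure_pmf.prob ?M1 S1 \<le> 1 - p ^ M" using m1 by simp
  have "measure_pmf.prob ?M1 S1 * measure_pmf.prob ?M2 S2 \<le> (1 - p ^ M) * (1 - p ^ M) ^ card I"
    by (intro mult_mono m1' IH) (auto simp: insert.prems power_le_one)
  then show ?case using eq insert.hyps by simp
qed


definition slots :: "nat set \<Rightarrow> (nat \<times> nat) set" where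
  "slots S = {(u,v). u \<in> S \<and> v \<in> S \<and> u < v}"

lemma adj_sym: "adj G u v = adj G v u"
  unfolding adj_def by (auto simp: min.commute max.commute)

lemma clique_subset: "is_clique G S \<Longrightarrow> T \<subseteq> S \<Longrightarrow> is_clique G T"
  unfolding is_clique_def by blast

lemma clique_from_slots: "(\<forall>e\<in>slots S. G e) \<Longrightarrow> is_clique G S"
proof -
  assume a: "\<forall>e\<in>slots S. G e"
  have "adj G u v" if "u \<in> S" "v \<in> S" "u \<noteq> v" for u v
  proof -
    have "(min u v, max u v) \<in> slots S" using that unfolding slots_def
      by (cases "u < v") (auto simp: min_def max_def)
    then show ?thesis using a that unfolding adj_def by blast
  qed
  then show ?thesis unfolding is_clique_def by blast
qed

lemma clique_insert: "is_clique G S \<Longrightarrow> (\<forall>x\<in>S. adj G r x) \<Longrightarrow> is_clique G (insert r S)"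
  unfolding is_clique_def using adj_sym by blast

definition goodfam :: "(nat \<times> nat \<Rightarrow> bool) \<Rightarrow> nat \<Rightarrow> nat \<Rightarrow> nat set set \<Rightarrow> nat set \<Rightarrow> bool" where
  "goodfam G lo hi F V \<longleftrightarrow> finite F \<and>
     (\<forall>X\<in>F. X \<noteq> {} \<and> is_clique G X \<and> lo \<le> card X \<and> card X \<le> hi) \<and>
     (\<forall>X\<in>F. \<forall>Y\<in>F. X \<noteq> Y \<longrightarrow> X \<inter> Y = {}) \<and> \<Union>F = V \<and>
     (\<forall>X\<in>F. \<forall>Y\<in>F. odd (card X) \<longrightarrow> odd (card Y) \<longrightarrow> X = Y)"

lemma goodfam_empty: "goodfam G lo hi {} {}"
  unfolding goodfam_def by auto

lemma goodfam_union:
  assumes "goodfam G lo hi F1 V1" "goodfam G lo hi F2 V2" "V1 \<inter> V2 = {}"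
    "\<forall>X\<in>F1. even (card X)"
  shows "goodfam G lo hi (F1 \<union> F2) (V1 \<union> V2)"
proof -
  have a1: "finite F1" "\<forall>X\<in>F1. X \<noteq> {} \<and> is_clique G X \<and> lo \<le> card X \<and> card X \<le> hi"
      "\<forall>X\<in>F1. \<forall>Y\<in>F1. X \<noteq> Y \<longrightarrow> X \<inter> Y = {}" "\<Union>F1 = V1"
    using assms(1) by (simp_all add: goodfam_def)
  have a2: "finite F2" "\<forall>X\<in>F2. X \<noteq> {} \<and> is_clique G X \<and> lo \<le> card X \<and> card X \<le> hi"
      "\<forall>X\<in>F2. \<forall>Y\<in>F2. X \<noteq> Y \<longrightarrow> X \<inter> Y = {}" "\<Union>F2 = V2"
      "\<forall>X\<in>F2. \<forall>Y\<in>F2. odd (card X) \<longrightarrow> odd (card Y) \<longrightarrow> X = Y"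
    using assms(2) by (simp_all add: goodfam_def)
  have d: "\<forall>X\<in>F1. \<forall>Y\<in>F2. X \<inter> Y = {}"
  proof (intro ballI)
    fix X Y assume "X \<in> F1" "Y \<in> F2"
    then have "X \<subseteq> V1" "Y \<subseteq> V2" using a1(4) a2(4) Union_upper by blast+
    then show "X \<inter> Y = {}" using assms(3) by blast
  qed
  have dj: "\<forall>X\<in>F1 \<union> F2. \<forall>Y\<in>F1 \<union> F2. X \<noteq> Y \<longrightarrow> X \<inter> Y = {}"
  proof (intro ballI impI)
    fix X Y assume X: "X \<in> F1 \<union> F2" and Y: "Y \<in> F1 \<union> F2" and ne: "X \<noteq> Y"
    show "X \<inter> Y = {}"
    proof (cases "X \<in> F1")
      case True
      then show ?thesis using Y ne d a1(3) by blast
    next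
      case False
      then have "X \<in> F2" using X by blast
      then show ?thesis using Y ne d a2(3) by (metis Int_commute Un_iff)
    qed
  qed
  have od: "\<forall>X\<in>F1 \<union> F2. \<forall>Y\<in>F1 \<union> F2. odd (card X) \<longrightarrow> odd (card Y) \<longrightarrow> X = Y"
    using assms(4) a2(5) by blast
  show ?thesis unfolding goodfam_def using a1 a2 dj od by auto
qed

lemma goodfam_single:
  assumes "X \<noteq> {}" "is_clique G X" "lo \<le> card X" "card X \<le> hi"
  shows "goodfam G lo hi {X} X"
  using assms unfolding goodfam_def by auto

lemma greedy:
  assumes "finite U" "\<forall>W\<subseteq>U. T \<le> card W \<longrightarrow> (\<exists>C\<subseteq>W. card C = s \<and> is_clique G C)"
    "0 < s" "even s" "lo \<le> s" "s \<le> hi"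
  shows "\<exists>F R. R \<subseteq> U \<and> card R < T \<and> goodfam G lo hi F (U - R) \<and> (\<forall>X\<in>F. even (card X))"
  using assms
proof (induction "card U" arbitrary: U rule: less_induct)
  case less
  show ?case
  proof (cases "card U < T")
    case True
    have "goodfam G lo hi {} (U - U)" using goodfam_empty[of G lo hi] by simp
    then show ?thesis using True by (intro exI[of _ "{}"] exI[of _ U]) simp
  next
    case False
    then have "T \<le> card U" by simp
    then obtain C where C: "C \<subseteq> U" "card C = s" "is_clique G C" using less.prems(2) by blast
    have Cne: "C \<noteq> {}" using C less.prems(3) by auto
    have lt: "card (U - C) < card U"
    proof (rule psubset_card_mono[OF less.prems(1)])
      show "U - C \<subset> U" using C Cne by blast
    qed
    have h2: "\<forall>W\<subseteq>U - C. T \<le> card W \<longrightarrow> (\<exists>C\<subseteq>W. card C = s \<and> is_clique G C)"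
      using less.prems(2) by (meson Diff_subset subset_trans)
    have finUC: "finite (U - C)" using less.prems(1) by simp
    obtain F R where FR: "R \<subseteq> U - C" "card R < T" "goodfam G lo hi F (U - C - R)" "\<forall>X\<in>F. even (card X)"
      using less.hyps[OF lt finUC h2 less.prems(3) less.prems(4) less.prems(5) less.prems(6)] by blast
    have g1: "goodfam G lo hi {C} C" using goodfam_single[OF Cne C(3)] C less.prems(5,6) by simp
    have "goodfam G lo hi ({C} \<union> F) (C \<union> (U - C - R))"
      by (rule goodfam_union[OF g1 FR(3)]) (use C less.prems(4) in auto)
    moreover have "C \<union> (U - C - R) = U - R" using C FR(1) by blast
    moreover have "\<forall>X\<in>{C} \<union> F. even (card X)" using FR(4) C less.prems(4) by simp
    moreover have "R \<subseteq> U" using FR(1) by blast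
    ultimately show ?thesis using FR(2) by (intro exI[of _ "{C} \<union> F"] exI[of _ R]) simp
  qed
qed


definition dd :: "nat \<Rightarrow> nat" where "dd k = 6 * k - 2"
definition blk :: "nat \<Rightarrow> nat \<Rightarrow> nat set" where "blk k j = {j * dd k ..< j * dd k + dd k}"
definition A1 :: "nat \<Rightarrow> nat \<Rightarrow> nat set" where "A1 k j = {j * dd k ..< j * dd k + (2*k-1)}"
definition A2 :: "nat \<Rightarrow> nat \<Rightarrow> nat set" where "A2 k j = {j * dd k + (2*k-1) ..< j * dd k + (4*k-2)}"
definition Bb :: "nat \<Rightarrow> nat \<Rightarrow> nat set" where "Bb k j = {j * dd k + (4*k-2) ..< j * dd k + dd k}"
definition grp :: "nat \<Rightarrow> nat \<Rightarrow> nat set" where "grp g i = {i * g ..< i * g + g}"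
definition gv :: "nat \<Rightarrow> nat \<Rightarrow> nat \<Rightarrow> nat set" where "gv k g i = \<Union> (blk k ` grp g i)"

lemma ivl_disj: "a + d \<le> b \<or> b + d \<le> a \<Longrightarrow> {a..<a+d} \<inter> {b..<b+d} = {}"
  for a b d :: nat by auto

lemma mul_step: "j < j' \<Longrightarrow> j * d + d \<le> j' * (d::nat)"
proof -
  assume "j < j'"
  then have "(j + 1) * d \<le> j' * d" by (intro mult_le_mono1) simp
  then show ?thesis by (simp add: algebra_simps)
qed

lemma blk_disj:
  assumes "j \<noteq> j'" shows "blk k j \<inter> blk k j' = {}"
  unfolding blk_def using assms by (intro ivl_disj) (meson mul_step nat_neq_iff)

lemma grp_disj: "i \<noteq> i' \<Longrightarrow> grp g i \<inter> grp g i' = {}"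
  unfolding grp_def by (intro ivl_disj) (meson mul_step nat_neq_iff)

lemma gv_unique: "r \<in> gv k g i \<Longrightarrow> r \<in> gv k g i' \<Longrightarrow> i = i'"
proof -
  assume a: "r \<in> gv k g i" "r \<in> gv k g i'"
  then obtain j j' where j: "j \<in> grp g i" "r \<in> blk k j" "j' \<in> grp g i'" "r \<in> blk k j'"
    unfolding gv_def by auto
  then have "j = j'" using blk_disj by blast
  then show ?thesis using j grp_disj by blast
qed

lemma kfacts: "1 \<le> k \<Longrightarrow> 2*k-1 \<le> 4*k-2 \<and> 4*k-2 \<le> dd k \<and> (4*k-2) - (2*k-1) = 2*k-1
   \<and> dd k - (4*k-2) = 2*k \<and> dd k - (2*k-1) = 4*k-1 \<and> dd k = 6*k-2"
  unfolding dd_def by auto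

lemma A2B_eq: "1 \<le> k \<Longrightarrow> A2 k j \<union> Bb k j = {j * dd k + (2*k-1) ..< j * dd k + dd k}"
  unfolding A2_def Bb_def using kfacts[of k] by (intro ivl_disj_un_two(3)) auto

lemma blk_eq: "1 \<le> k \<Longrightarrow> blk k j = A1 k j \<union> (A2 k j \<union> Bb k j)"
  unfolding A2B_eq blk_def A1_def using kfacts[of k] by (intro ivl_disj_un_two(3)[symmetric]) auto

lemma parts_sub:
  assumes "1 \<le> k"
  shows "A1 k j \<subseteq> blk k j" "A2 k j \<subseteq> blk k j" "Bb k j \<subseteq> blk k j"
    "A1 k j \<inter> A2 k j = {}" "A1 k j \<inter> Bb k j = {}" "A2 k j \<inter> Bb k j = {}"
    "A2 k j \<union> Bb k j \<subseteq> blk k j"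
    "card (A1 k j) = 2*k-1" "card (A2 k j) = 2*k-1" "card (Bb k j) = 2*k" "card (blk k j) = 6*k-2"
    "card (A2 k j \<union> Bb k j) = 4*k - 1"
proof -
  note kf = kfacts[OF assms]
  note be = blk_eq[OF assms, of j]
  show "A1 k j \<subseteq> blk k j" "A2 k j \<subseteq> blk k j" "Bb k j \<subseteq> blk k j" "A2 k j \<union> Bb k j \<subseteq> blk k j"
    using be by blast+
  show "A1 k j \<inter> A2 k j = {}" "A1 k j \<inter> Bb k j = {}" "A2 k j \<inter> Bb k j = {}"
    unfolding A1_def A2_def Bb_def using kf by auto
  show "card (A1 k j) = 2*k-1" "card (A2 k j) = 2*k-1" "card (Bb k j) = 2*k" "card (blk k j) = 6*k-2"
    unfolding A1_def A2_def Bb_def blk_def using kf by simp_all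
  show "card (A2 k j \<union> Bb k j) = 4*k - 1"
    unfolding A2B_eq[OF assms] using kf by simp
qed


definition H2 :: "(nat \<times> nat \<Rightarrow> bool) \<Rightarrow> nat \<Rightarrow> nat \<Rightarrow> nat \<Rightarrow> nat \<Rightarrow> bool" where
  "H2 G k g n Gn \<longleftrightarrow> (\<forall>r<n. \<forall>r'<n. \<forall>i<Gn. r \<notin> gv k g i \<longrightarrow> r' \<notin> gv k g i \<longrightarrow>
     (\<exists>j\<in>grp g i. is_clique G (blk k j) \<and> (\<forall>x\<in>A1 k j. adj G r x) \<and> (\<forall>x\<in>A2 k j. adj G r' x)))"

lemma gv_set_small: "finite {i. r \<in> gv k g i} \<and> card {i. r \<in> gv k g i} \<le> 1"
proof (cases "\<exists>i. r \<in> gv k g i")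
  case True
  then obtain i0 where "r \<in> gv k g i0" by blast
  then have "{i. r \<in> gv k g i} = {i0}" using gv_unique by blast
  then show ?thesis by simp
next
  case False
  then have "{i. r \<in> gv k g i} = {}" by blast
  then show ?thesis by simp
qed

lemma pick_group:
  assumes "finite I" "3 \<le> card I"
  shows "\<exists>i\<in>I. r \<notin> gv k g i \<and> r' \<notin> gv k g i"
proof (rule ccontr)
  assume "\<not> ?thesis"
  then have "I \<subseteq> {i. r \<in> gv k g i} \<union> {i. r' \<in> gv k g i}" by blast
  moreover have "card ({i. r \<in> gv k g i} \<union> {i. r' \<in> gv k g i}) \<le> 2"
    using gv_set_small[of r k g] gv_set_small[of r' k g] card_Un_le[of "{i. r \<in> gv k g i}" "{i. r' \<in> gv k g i}"]
    by linarith
  ultimately have "card I \<le> 2"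
    using gv_set_small[of r k g] gv_set_small[of r' k g] card_mono[of "{i. r \<in> gv k g i} \<union> {i. r' \<in> gv k g i}" I]
    by (meson finite_UnI le_trans)
  then show False using assms by simp
qed

lemma blocks_fam:
  assumes "1 \<le> k" "finite K" "\<forall>j\<in>K. is_clique G (blk k j)"
  shows "goodfam G (2*k) (6*k) (blk k ` K) (\<Union>(blk k ` K)) \<and> (\<forall>X\<in>blk k ` K. even (card X))"
proof -
  have c: "card (blk k j) = 6*k-2" for j using parts_sub(11)[OF assms(1)] .
  have ev: "even (6*k-2)" using assms(1) by presburger
  have ne: "blk k j \<noteq> {}" for j 
  proof -
    have "0 < card (blk k j)" using c[of j] assms(1) by simp
    then show ?thesis by auto
  qed
  have dj: "\<forall>X\<in>blk k ` K. \<forall>Y\<in>blk k ` K. X \<noteq> Y \<longrightarrow> X \<inter> Y = {}"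
  proof (intro ballI impI)
    fix X Y assume "X \<in> blk k ` K" "Y \<in> blk k ` K" "X \<noteq> Y"
    then obtain j j' where "X = blk k j" "Y = blk k j'" "j \<noteq> j'" by blast
    then show "X \<inter> Y = {}" using blk_disj by simp
  qed
  have sz: "\<forall>X\<in>blk k ` K. X \<noteq> {} \<and> is_clique G X \<and> 2*k \<le> card X \<and> card X \<le> 6*k"
  proof -
    have "2*k \<le> 6*k-2" "6*k-2 \<le> 6*k" using assms(1) by linarith+
    then show ?thesis using c ne assms(3) by simp
  qed
  have od: "\<forall>X\<in>blk k ` K. even (card X)" using c ev by simp
  have "\<forall>X\<in>blk k ` K. \<forall>Y\<in>blk k ` K. odd (card X) \<longrightarrow> odd (card Y) \<longrightarrow> X = Y" using od by simp
  then show ?thesis unfolding goodfam_def using assms(2) dj sz od by simp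
qed


lemma fin_parts: "finite (A1 k j)" "finite (A2 k j)" "finite (Bb k j)" "finite (blk k j)"
  unfolding A1_def A2_def Bb_def blk_def by simp_all

lemma absorb:
  assumes k1: "1 \<le> k" and h2: "H2 G k g n Gn"
  shows "finite R \<Longrightarrow> finite K \<Longrightarrow> R \<subseteq> {..<n} \<Longrightarrow> I \<subseteq> {..<Gn} \<Longrightarrow>
    R \<inter> \<Union>(blk k ` K) = {} \<Longrightarrow> (\<forall>i\<in>I. \<forall>j\<in>grp g i. is_clique G (blk k j) \<longrightarrow> j \<in> K) \<Longrightarrow>
    (\<forall>j\<in>K. is_clique G (blk k j)) \<Longrightarrow> card R + 3 \<le> card I \<Longrightarrow>
    \<exists>F. goodfam G (2*k) (6*k) F (R \<union> \<Union>(blk k ` K))"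
proof (induction "card R" arbitrary: R K I rule: less_induct)
  case less
  note finR = less.prems(1) and finK = less.prems(2) and Rn = less.prems(3) and In = less.prems(4)
    and RK = less.prems(5) and IK = less.prems(6) and Kc = less.prems(7) and cRI = less.prems(8)
  have finI: "finite I" using In finite_subset by blast
  have I3: "3 \<le> card I" using cRI by simp
  note ps = parts_sub[OF k1]
  have kk: "2*k \<le> 2*k" "2*k \<le> 6*k" "2*k \<le> 4*k-1" "4*k-1 \<le> 6*k" "2*k \<le> 6*k-2" "6*k-2 \<le> 6*k"
    "even (2*k)" "odd (4*k-1)" "even (6*k-2)"
    using k1 by presburger+
  have getj: "\<exists>j\<in>K. is_clique G (blk k j) \<and> (\<forall>x\<in>A1 k j. adj G r x) \<and> (\<forall>x\<in>A2 k j. adj G r' x)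
        \<and> (\<exists>i\<in>I. j \<in> grp g i)"
    if "r \<in> R" "r' \<in> R" for r r'
  proof -
    obtain i where i: "i \<in> I" "r \<notin> gv k g i" "r' \<notin> gv k g i"
      using pick_group[OF finI I3] by blast
    have "r < n" "r' < n" "i < Gn" using that Rn i In by auto
    then obtain j where j: "j \<in> grp g i" "is_clique G (blk k j)" "\<forall>x\<in>A1 k j. adj G r x" "\<forall>x\<in>A2 k j. adj G r' x"
      using h2 i unfolding H2_def by blast
    have "j \<in> K" using IK i(1) j(1,2) by blast
    then show ?thesis using j i(1) by blast
  qed
  consider (z) "R = {}" | (o) r where "R = {r}" | (t) r r' where "r \<in> R" "r' \<in> R" "r \<noteq> r'"
    by (metis ex_in_conv insertI1 is_singletonI' is_singleton_the_elem)
  then show ?case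
  proof cases
    case z
    then show ?thesis using blocks_fam[OF k1 finK Kc] by auto
  next
    case o
    then obtain j where j: "j \<in> K" "is_clique G (blk k j)" "\<forall>x\<in>A1 k j. adj G r x"
      using getj[of r r] by blast
    have rj: "r \<notin> blk k j" using RK o j(1) by blast
    define X1 where "X1 = insert r (A1 k j)"
    define X2 where "X2 = A2 k j \<union> Bb k j"
    have rA: "r \<notin> A1 k j" using rj ps(1) by blast
    have c1: "card X1 = 2*k" unfolding X1_def using rA ps(8) k1
      by (simp add: card_insert_disjoint fin_parts)
    have c2: "card X2 = 4*k-1" unfolding X2_def using ps(12) .
    have q1: "is_clique G X1" unfolding X1_def
      by (rule clique_insert[OF clique_subset[OF j(2) ps(1)] j(3)])
    have q2: "is_clique G X2" unfolding X2_def by (rule clique_subset[OF j(2) ps(7)])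
    have g1: "goodfam G (2*k) (6*k) {X1} X1" using goodfam_single[OF _ q1] c1 kk unfolding X1_def by auto
    have g2: "goodfam G (2*k) (6*k) {X2} X2"
    proof (rule goodfam_single[OF _ q2])
      show "X2 \<noteq> {}" using c2 k1 by (metis card.empty diff_is_0_eq not_le zero_less_diff kk(3) le_zero_eq mult_pos_pos zero_less_numeral order_less_le_trans less_numeral_extra(1) Suc_le_eq)
    qed (use c2 kk in auto)
    have d12: "X1 \<inter> X2 = {}" unfolding X1_def X2_def using rj ps(4,5) ps(7) by blast
    have g12: "goodfam G (2*k) (6*k) ({X1} \<union> {X2}) (X1 \<union> X2)"
      by (rule goodfam_union[OF g1 g2 d12]) (use c1 kk in simp)
    have bf: "goodfam G (2*k) (6*k) (blk k ` (K - {j})) (\<Union>(blk k ` (K - {j}))) \<and> (\<forall>X\<in>blk k ` (K - {j}). even (card X))"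
      using blocks_fam[OF k1 _ ] finK Kc by simp
    have db: "\<Union>(blk k ` (K - {j})) \<inter> (X1 \<union> X2) = {}"
    proof -
      have "\<Union>(blk k ` (K - {j})) \<inter> blk k j = {}" using blk_disj by blast
      moreover have "X1 \<union> X2 \<subseteq> insert r (blk k j)" unfolding X1_def X2_def using ps(1,7) by blast
      moreover have "r \<notin> \<Union>(blk k ` (K - {j}))" using RK o by blast
      ultimately show ?thesis by blast
    qed
    have "goodfam G (2*k) (6*k) (blk k ` (K - {j}) \<union> ({X1} \<union> {X2})) (\<Union>(blk k ` (K - {j})) \<union> (X1 \<union> X2))"
      using goodfam_union[OF conjunct1[OF bf] g12 db] bf by blast
    moreover have "\<Union>(blk k ` (K - {j})) \<union> (X1 \<union> X2) = R \<union> \<Union>(blk k ` K)"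
    proof -
      have "X1 \<union> X2 = insert r (blk k j)" unfolding X1_def X2_def using blk_eq[OF k1, of j] by blast
      moreover have "\<Union>(blk k ` K) = blk k j \<union> \<Union>(blk k ` (K - {j}))" using j(1) by blast
      ultimately show ?thesis using o by blast
    qed
    ultimately show ?thesis by metis
  next
    case t
    obtain j where j: "j \<in> K" "is_clique G (blk k j)" "\<forall>x\<in>A1 k j. adj G r x" "\<forall>x\<in>A2 k j. adj G r' x"
      and ji: "\<exists>i\<in>I. j \<in> grp g i"
      using getj[OF t(1,2)] by blast
    obtain i where i: "i \<in> I" "j \<in> grp g i" using ji by blast
    have rj: "r \<notin> blk k j" "r' \<notin> blk k j" using RK t j(1) by blast+
    define R' where "R' = R - {r, r'}"
    define K' where "K' = K - {j}"
    define I' where "I' = I - {i}"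
    have cR': "card R' = card R - 2" unfolding R'_def using t finR by (simp add: card_Diff_subset)
    have cI': "card I' = card I - 1" unfolding I'_def using i finI by simp
    have cR2: "2 \<le> card R"
    proof -
      have "{r, r'} \<subseteq> R" using t by blast
      then have "card {r, r'} \<le> card R" using finR card_mono by blast
      then show ?thesis using t(3) by simp
    qed
    have lt: "card R' < card R" using cR' cR2 by simp
    have IK': "\<forall>i'\<in>I'. \<forall>j'\<in>grp g i'. is_clique G (blk k j') \<longrightarrow> j' \<in> K'"
    proof (intro ballI impI)
      fix i' j' assume a: "i' \<in> I'" "j' \<in> grp g i'" "is_clique G (blk k j')"
      then have "i' \<noteq> i" "i' \<in> I" unfolding I'_def by auto
      then have "j' \<noteq> j" using a(2) i(2) grp_disj by blast
      then show "j' \<in> K'" unfolding K'_def using IK a \<open>i' \<in> I\<close> by blast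
    qed
    obtain F' where F': "goodfam G (2*k) (6*k) F' (R' \<union> \<Union>(blk k ` K'))"
    proof -
      have "\<exists>F. goodfam G (2*k) (6*k) F (R' \<union> \<Union>(blk k ` K'))"
      proof (rule less.hyps[OF lt])
        show "finite R'" "finite K'" "R' \<subseteq> {..<n}" "I' \<subseteq> {..<Gn}"
          unfolding R'_def K'_def I'_def using finR finK Rn In by auto
        show "R' \<inter> \<Union>(blk k ` K') = {}" unfolding R'_def K'_def using RK by blast
        show "\<forall>i\<in>I'. \<forall>j\<in>grp g i. is_clique G (blk k j) \<longrightarrow> j \<in> K'" by (rule IK')
        show "\<forall>j\<in>K'. is_clique G (blk k j)" unfolding K'_def using Kc by blast
        show "card R' + 3 \<le> card I'" using cR' cI' cRI cR2 by simp
      qed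
      then show ?thesis using that by blast
    qed
    define X1 where "X1 = insert r (A1 k j)"
    define X2 where "X2 = insert r' (A2 k j)"
    define X3 where "X3 = Bb k j"
    have c1: "card X1 = 2*k" unfolding X1_def using rj(1) ps(1) ps(8) k1
      by (subst card_insert_disjoint) (auto simp: fin_parts)
    have c2: "card X2 = 2*k" unfolding X2_def using rj(2) ps(2) ps(9) k1
      by (subst card_insert_disjoint) (auto simp: fin_parts)
    have c3: "card X3 = 2*k" unfolding X3_def using ps(10) .
    have q1: "is_clique G X1" unfolding X1_def
      by (rule clique_insert[OF clique_subset[OF j(2) ps(1)] j(3)])
    have q2: "is_clique G X2" unfolding X2_def
      by (rule clique_insert[OF clique_subset[OF j(2) ps(2)] j(4)])
    have q3: "is_clique G X3" unfolding X3_def by (rule clique_subset[OF j(2) ps(3)])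
    have ne: "X \<noteq> {}" if "card X = 2*k" for X using that k1 by auto
    have g1: "goodfam G (2*k) (6*k) {X1} X1" using goodfam_single[OF ne[OF c1] q1] c1 kk by simp
    have g2: "goodfam G (2*k) (6*k) {X2} X2" using goodfam_single[OF ne[OF c2] q2] c2 kk by simp
    have g3: "goodfam G (2*k) (6*k) {X3} X3" using goodfam_single[OF ne[OF c3] q3] c3 kk by simp
    have d12: "X1 \<inter> X2 = {}" unfolding X1_def X2_def using rj t(3) ps(1,2,4) by blast
    have d123: "(X1 \<union> X2) \<inter> X3 = {}" unfolding X1_def X2_def X3_def using rj ps(1,2,3,5,6) by blast
    have g12: "goodfam G (2*k) (6*k) ({X1} \<union> {X2}) (X1 \<union> X2)"
      by (rule goodfam_union[OF g1 g2 d12]) (use c1 kk in simp)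
    have g123: "goodfam G (2*k) (6*k) (({X1} \<union> {X2}) \<union> {X3}) ((X1 \<union> X2) \<union> X3)"
      by (rule goodfam_union[OF g12 g3 d123]) (use c1 c2 kk in simp)
    have XU: "(X1 \<union> X2) \<union> X3 = {r, r'} \<union> blk k j"
      unfolding X1_def X2_def X3_def using blk_eq[OF k1, of j] by blast
    have dd': "((X1 \<union> X2) \<union> X3) \<inter> (R' \<union> \<Union>(blk k ` K')) = {}"
    proof -
      have "\<Union>(blk k ` K') \<inter> blk k j = {}" unfolding K'_def using blk_disj by blast
      moreover have "r \<notin> \<Union>(blk k ` K')" "r' \<notin> \<Union>(blk k ` K')" unfolding K'_def using RK t by blast+
      moreover have "R' \<inter> blk k j = {}" unfolding R'_def using RK j(1) by blast
      ultimately show ?thesis unfolding XU R'_def by blast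
    qed
    have "goodfam G (2*k) (6*k) ((({X1} \<union> {X2}) \<union> {X3}) \<union> F') (((X1 \<union> X2) \<union> X3) \<union> (R' \<union> \<Union>(blk k ` K')))"
      by (rule goodfam_union[OF g123 F' dd']) (use c1 c2 c3 kk in simp)
    moreover have "((X1 \<union> X2) \<union> X3) \<union> (R' \<union> \<Union>(blk k ` K')) = R \<union> \<Union>(blk k ` K)"
    proof -
      have "\<Union>(blk k ` K) = blk k j \<union> \<Union>(blk k ` K')" unfolding K'_def using j(1) by blast
      then show ?thesis unfolding XU R'_def using t by blast
    qed
    ultimately show ?thesis by metis
  qed
qed


lemma det_main:
  assumes k1: "1 \<le> k"
    and h1: "\<forall>W \<subseteq> {0..<n}. T \<le> card W \<longrightarrow> (\<exists>C\<subseteq>W. card C = 2*k \<and> is_clique G C)"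
    and h2: "H2 G k g n Gn" and TG: "T + 3 \<le> Gn" and vol: "Gn * g * dd k \<le> n"
  shows "\<exists>F. goodfam G (2*k) (6*k) F {0..<n}"
proof -
  define J where "J = {j. j < Gn * g \<and> is_clique G (blk k j)}"
  define BV where "BV = \<Union>(blk k ` J)"
  have finJ: "finite J" unfolding J_def by simp
  have BVn: "BV \<subseteq> {0..<n}"
  proof
    fix x assume "x \<in> BV"
    then obtain j where j: "j \<in> J" "x \<in> blk k j" unfolding BV_def by blast
    then have "j + 1 \<le> Gn * g" unfolding J_def by simp
    then have "(j + 1) * dd k \<le> Gn * g * dd k" by (rule mult_le_mono1)
    then show "x \<in> {0..<n}" using j(2) vol unfolding blk_def by (simp add: algebra_simps)
  qed
  define U where "U = {0..<n} - BV"
  have finU: "finite U" unfolding U_def by simp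
  have h1': "\<forall>W\<subseteq>U. T \<le> card W \<longrightarrow> (\<exists>C\<subseteq>W. card C = 2*k \<and> is_clique G C)"
    using h1 unfolding U_def by (meson Diff_subset subset_trans)
  obtain F1 R where FR: "R \<subseteq> U" "card R < T" "goodfam G (2*k) (6*k) F1 (U - R)" "\<forall>X\<in>F1. even (card X)"
    using greedy[OF finU h1', of "2*k" "6*k"] k1 by auto
  have finR: "finite R" using FR(1) finU finite_subset by blast
  have "\<exists>F. goodfam G (2*k) (6*k) F (R \<union> \<Union>(blk k ` J))"
  proof (rule absorb[OF k1 h2 finR finJ])
    show "R \<subseteq> {..<n}" using FR(1) unfolding U_def by auto
    show "{..<Gn} \<subseteq> {..<Gn}" by simp
    show "R \<inter> \<Union>(blk k ` J) = {}" using FR(1) unfolding U_def BV_def by blast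
    show "\<forall>i\<in>{..<Gn}. \<forall>j\<in>grp g i. is_clique G (blk k j) \<longrightarrow> j \<in> J"
    proof (intro ballI impI)
      fix i j assume a: "i \<in> {..<Gn}" "j \<in> grp g i" "is_clique G (blk k j)"
      then have "j < i * g + g" unfolding grp_def by simp
      also have "i * g + g = (i + 1) * g" by simp
      also have "\<dots> \<le> Gn * g" using a(1) by (intro mult_le_mono1) simp
      finally show "j \<in> J" unfolding J_def using a(3) by simp
    qed
    show "\<forall>j\<in>J. is_clique G (blk k j)" unfolding J_def by simp
    show "card R + 3 \<le> card {..<Gn}" using FR(2) TG by simp
  qed
  then obtain F2 where F2: "goodfam G (2*k) (6*k) F2 (R \<union> BV)" unfolding BV_def by blast
  have "goodfam G (2*k) (6*k) (F1 \<union> F2) ((U - R) \<union> (R \<union> BV))"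
    by (rule goodfam_union[OF FR(3) F2 _ FR(4)]) (use FR(1) in \<open>auto simp: U_def\<close>)
  moreover have "(U - R) \<union> (R \<union> BV) = {0..<n}" using FR(1) BVn unfolding U_def by blast
  ultimately show ?thesis by metis
qed

lemma fam_to_list:
  assumes gf: "goodfam G lo hi F {0..<n}"
  shows "\<exists>Vs. is_partition n Vs \<and> (\<forall>i<length Vs. is_clique G (Vs!i) \<and> lo \<le> card (Vs!i) \<and>
     card (Vs!i) \<le> hi \<and> (i < length Vs - 1 \<longrightarrow> even (card (Vs!i))))"
proof -
  have finF: "finite F" and pr: "\<forall>X\<in>F. X \<noteq> {} \<and> is_clique G X \<and> lo \<le> card X \<and> card X \<le> hi"
    and dj: "\<forall>X\<in>F. \<forall>Y\<in>F. X \<noteq> Y \<longrightarrow> X \<inter> Y = {}" and un: "\<Union>F = {0..<n}"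
    and od: "\<forall>X\<in>F. \<forall>Y\<in>F. odd (card X) \<longrightarrow> odd (card Y) \<longrightarrow> X = Y"
    using gf by (simp_all add: goodfam_def)
  have part: "is_partition n Vs" if "set Vs = F" "distinct Vs" for Vs
    unfolding is_partition_def
  proof (intro conjI allI impI)
    fix i assume "i < length Vs" then show "Vs ! i \<noteq> {}" using that pr nth_mem by blast
  next
    fix i j assume "i < length Vs" "j < length Vs" "i \<noteq> j"
    then have "Vs ! i \<noteq> Vs ! j" "Vs ! i \<in> F" "Vs ! j \<in> F" using that nth_eq_iff_index_eq nth_mem by blast+
    then show "Vs ! i \<inter> Vs ! j = {}" using dj by blast
  next
    show "\<Union>(set Vs) = {0..<n}" using that un by simp
  qed
  show ?thesis
  proof (cases "\<exists>Z\<in>F. odd (card Z)")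
    case True
    then obtain Z where Z: "Z \<in> F" "odd (card Z)" by blast
    obtain xs where xs: "set xs = F - {Z}" "distinct xs" using finite_distinct_list[of "F - {Z}"] finF by auto
    define Vs where "Vs = xs @ [Z]"
    have sV: "set Vs = F" unfolding Vs_def using xs Z by auto
    have dV: "distinct Vs" unfolding Vs_def using xs by simp
    have "\<forall>i<length Vs. is_clique G (Vs!i) \<and> lo \<le> card (Vs!i) \<and> card (Vs!i) \<le> hi \<and> (i < length Vs - 1 \<longrightarrow> even (card (Vs!i)))"
    proof (intro allI impI conjI)
      fix i assume i: "i < length Vs"
      then have m: "Vs ! i \<in> F" using sV nth_mem by blast
      show "is_clique G (Vs!i)" "lo \<le> card (Vs!i)" "card (Vs!i) \<le> hi" using m pr by blast+
      assume "i < length Vs - 1"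
      then have "Vs ! i = xs ! i" "i < length xs" unfolding Vs_def by (simp_all add: nth_append)
      then have "Vs ! i \<in> F - {Z}" using xs(1) nth_mem by metis
      then show "even (card (Vs!i))" using od Z by blast
    qed
    then show ?thesis using part[OF sV dV] by blast
  next
    case False
    obtain xs where xs: "set xs = F" "distinct xs" using finite_distinct_list finF by auto
    have "\<forall>i<length xs. is_clique G (xs!i) \<and> lo \<le> card (xs!i) \<and> card (xs!i) \<le> hi \<and> (i < length xs - 1 \<longrightarrow> even (card (xs!i)))"
      using xs(1) pr False nth_mem by blast
    then show ?thesis using part[OF xs] by blast
  qed
qed


definition pidx :: "nat \<Rightarrow> nat \<Rightarrow> nat \<Rightarrow> nat \<Rightarrow> nat" where
  "pidx P c d i = (c + d * i) mod P + P * i"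

lemma pidx_lt: "0 < P \<Longrightarrow> i < s \<Longrightarrow> pidx P c d i < P * s"
proof -
  assume a: "0 < P" "i < s"
  have "(c + d * i) mod P < P" using a by simp
  then have "pidx P c d i < P + P * i" unfolding pidx_def by simp
  also have "P + P * i = P * (i + 1)" by simp
  also have "\<dots> \<le> P * s" using a by (intro mult_le_mono2) simp
  finally show ?thesis .
qed

lemma pidx_div: "0 < P \<Longrightarrow> pidx P c d i div P = i"
  unfolding pidx_def by simp

lemma pidx_mod: "0 < P \<Longrightarrow> pidx P c d i mod P = (c + d * i) mod P"
  unfolding pidx_def by simp

lemma small_dvd_zero: "(P::int) dvd x \<Longrightarrow> \<bar>x\<bar> < P \<Longrightarrow> x = 0"
proof (rule ccontr)
  assume a: "P dvd x" "\<bar>x\<bar> < P" "x \<noteq> 0"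
  then have "\<bar>P\<bar> \<le> \<bar>x\<bar>" using dvd_imp_le_int by blast
  then show False using a(2) by simp
qed

lemma pidx_inter:
  assumes P0: "0 < P" and DsP: "D * s \<le> P" and cd: "c < P" "c' < P" "d < D" "d' < D"
    and ne: "(c, d) \<noteq> (c', d')"
    and i: "i1 < s" "i2 < s" "j1 < s" "j2 < s"
    and e1: "pidx P c d i1 = pidx P c' d' j1" and e2: "pidx P c d i2 = pidx P c' d' j2"
  shows "i1 = i2"
proof (rule ccontr)
  assume neq: "i1 \<noteq> i2"
  have "i1 = j1" "i2 = j2" using pidx_div[OF P0] e1 e2 by metis+
  then have m1: "(c + d * i1) mod P = (c' + d' * i1) mod P" and m2: "(c + d * i2) mod P = (c' + d' * i2) mod P"
    using pidx_mod[OF P0] e1 e2 by metis+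
  have z1: "int P dvd (int c - int c') + (int d - int d') * int i1"
    using m1 by (simp add: mod_eq_dvd_iff[symmetric] zmod_int[symmetric] algebra_simps) (metis of_nat_add of_nat_mult zmod_int)
  have z2: "int P dvd (int c - int c') + (int d - int d') * int i2"
    using m2 by (simp add: mod_eq_dvd_iff[symmetric] zmod_int[symmetric] algebra_simps) (metis of_nat_add of_nat_mult zmod_int)
  have "int P dvd ((int c - int c') + (int d - int d') * int i1) - ((int c - int c') + (int d - int d') * int i2)"
    using z1 z2 by (rule dvd_diff)
  then have z3: "int P dvd (int d - int d') * (int i1 - int i2)" by (simp add: algebra_simps)
  have b1: "\<bar>int d - int d'\<bar> < int D" "\<bar>int i1 - int i2\<bar> < int s" using cd i by auto
  have "\<bar>(int d - int d') * (int i1 - int i2)\<bar> = \<bar>int d - int d'\<bar> * \<bar>int i1 - int i2\<bar>" by (simp add: abs_mult)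
  also have "\<dots> < int D * int s"
    by (rule mult_strict_mono[OF b1]) (use b1 in auto)
  also have "\<dots> \<le> int P" using DsP by (metis of_nat_le_iff of_nat_mult)
  finally have "(int d - int d') * (int i1 - int i2) = 0" using small_dvd_zero[OF z3] by simp
  then have dd: "d = d'" using neq by simp
  then have "int P dvd int c - int c'" using z1 by simp
  moreover have "\<bar>int c - int c'\<bar> < int P" using cd by auto
  ultimately have "c = c'" using small_dvd_zero by fastforce
  then show False using ne dd by simp
qed


lemma fin_edge_slots: "finite (edge_slots n)"
proof -
  have "edge_slots n \<subseteq> {..<n} \<times> {..<n}" unfolding edge_slots_def by auto
  then show ?thesis by (rule finite_subset) simp
qed

lemma slots_sub: "S \<subseteq> {0..<n} \<Longrightarrow> slots S \<subseteq> edge_slots n"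
  unfolding slots_def edge_slots_def by auto

lemma card_slots: "finite S \<Longrightarrow> card (slots S) \<le> card S ^ 2"
proof -
  assume f: "finite S"
  have "slots S \<subseteq> S \<times> S" unfolding slots_def by auto
  then have "card (slots S) \<le> card (S \<times> S)" using f by (intro card_mono) auto
  then show ?thesis by (simp add: card_cartesian_product power2_eq_square)
qed

definition Cset :: "(nat \<Rightarrow> nat) \<Rightarrow> nat \<Rightarrow> nat \<Rightarrow> nat \<times> nat \<Rightarrow> nat set" where
  "Cset h P s l = h ` ((\<lambda>i. pidx P (fst l) (snd l) i) ` {..<s})"

lemma Cset_props:
  assumes hb: "bij_betw h {0..<card W} W" and P0: "0 < P" and Ps: "P * s \<le> card W"
  shows "Cset h P s l \<subseteq> W" "card (Cset h P s l) = s"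
proof -
  have sub: "(\<lambda>i. pidx P (fst l) (snd l) i) ` {..<s} \<subseteq> {0..<card W}"
  proof
    fix x assume "x \<in> (\<lambda>i. pidx P (fst l) (snd l) i) ` {..<s}"
    then obtain i where "i < s" "x = pidx P (fst l) (snd l) i" by blast
    then show "x \<in> {0..<card W}" using less_le_trans[OF pidx_lt[OF P0, of i s "fst l" "snd l"] Ps] by simp
  qed
  show "Cset h P s l \<subseteq> W" unfolding Cset_def using sub hb bij_betw_imp_surj_on by blast
  have inj1: "inj_on (\<lambda>i. pidx P (fst l) (snd l) i) {..<s}"
    by (rule inj_onI) (metis pidx_div[OF P0])
  have inj2: "inj_on h ((\<lambda>i. pidx P (fst l) (snd l) i) ` {..<s})"
    using hb sub bij_betw_imp_inj_on inj_on_subset by blast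
  show "card (Cset h P s l) = s" unfolding Cset_def
    using card_image[OF inj2] card_image[OF inj1] by simp
qed

lemma Cset_disj:
  assumes hb: "bij_betw h {0..<card W} W" and P0: "0 < P" and Ps: "P * s \<le> card W" and DsP: "D * s \<le> P"
    and l: "l \<in> {..<P} \<times> {..<D}" "l' \<in> {..<P} \<times> {..<D}" "l \<noteq> l'"
  shows "slots (Cset h P s l) \<inter> slots (Cset h P s l') = {}"
proof (rule ccontr)
  assume "slots (Cset h P s l) \<inter> slots (Cset h P s l') \<noteq> {}"
  then obtain u v where uv: "u \<in> Cset h P s l" "v \<in> Cset h P s l" "u \<in> Cset h P s l'" "v \<in> Cset h P s l'" "u < v"
    unfolding slots_def by auto
  obtain i1 i2 j1 j2 where ij: "i1 < s" "i2 < s" "j1 < s" "j2 < s"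
    "u = h (pidx P (fst l) (snd l) i1)" "v = h (pidx P (fst l) (snd l) i2)"
    "u = h (pidx P (fst l') (snd l') j1)" "v = h (pidx P (fst l') (snd l') j2)"
    using uv(1-4) unfolding Cset_def by auto
  have inj: "inj_on h {0..<card W}" using hb bij_betw_imp_inj_on by blast
  have lt: "pidx P a b i \<in> {0..<card W}" if "i < s" for a b i
    using less_le_trans[OF pidx_lt[OF P0 that] Ps] by simp
  have e1: "pidx P (fst l) (snd l) i1 = pidx P (fst l') (snd l') j1"
    using inj_onD[OF inj _ lt[OF ij(1)] lt[OF ij(3)]] ij(5,7) by simp
  have e2: "pidx P (fst l) (snd l) i2 = pidx P (fst l') (snd l') j2"
    using inj_onD[OF inj _ lt[OF ij(2)] lt[OF ij(4)]] ij(6,8) by simp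
  have ne: "(fst l, snd l) \<noteq> (fst l', snd l')" using l(3) by (simp add: prod_eq_iff)
  have "i1 = i2"
    by (rule pidx_inter[OF P0 DsP _ _ _ _ ne ij(1-4) e1 e2]) (use l in auto)
  then show False using ij(5,6) uv(5) by simp
qed

lemma prob_mono_le:
  assumes "A \<subseteq> B"
  shows "measure_pmf.prob M A \<le> measure_pmf.prob M B"
  using assms by (intro measure_pmf.finite_measure_mono) auto

lemma fail1_bound:
  assumes p: "0 \<le> p" "p \<le> 1" and P0: "0 < P" and DsP: "D * s \<le> P"
  shows "measure_pmf.prob (gnp n p)
    {G. \<not>(\<forall>W\<subseteq>{0..<n}. P * s \<le> card W \<longrightarrow> (\<exists>C\<subseteq>W. card C = s \<and> is_clique G C))}
    \<le> 2 ^ n * (1 - p ^ (s^2)) ^ (P * D)"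
proof -
  define Ws where "Ws = {W. W \<subseteq> {0..<n} \<and> P * s \<le> card W}"
  define hh where "hh W = (SOME h. bij_betw h {0..<card W} W)" for W :: "nat set"
  have hb: "bij_betw (hh W) {0..<card W} W" if "W \<in> Ws" for W
  proof -
    have "finite W" using that unfolding Ws_def by (auto intro: finite_subset)
    then have "\<exists>h. bij_betw h {0..<card W} W" using ex_bij_betw_nat_finite by blast
    then show ?thesis unfolding hh_def by (rule someI_ex)
  qed
  define Ev where "Ev W = {G. \<forall>l\<in>{..<P} \<times> {..<D}. \<not>(\<forall>e\<in>slots (Cset (hh W) P s l). G e)}" for W
  have finWs: "finite Ws" unfolding Ws_def by (rule finite_subset[of _ "Pow {0..<n}"]) auto
  have cWs: "card Ws \<le> 2 ^ n"
  proof -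
    have "card Ws \<le> card (Pow {0..<n::nat})" unfolding Ws_def by (intro card_mono) auto
    then show ?thesis by (simp add: card_Pow)
  qed
  have incl: "{G. \<not>(\<forall>W\<subseteq>{0..<n}. P * s \<le> card W \<longrightarrow> (\<exists>C\<subseteq>W. card C = s \<and> is_clique G C))}
      \<subseteq> (\<Union>W\<in>Ws. Ev W)"
  proof
    fix G assume "G \<in> {G. \<not>(\<forall>W\<subseteq>{0..<n}. P * s \<le> card W \<longrightarrow> (\<exists>C\<subseteq>W. card C = s \<and> is_clique G C))}"
    then obtain W where W: "W \<subseteq> {0..<n}" "P * s \<le> card W" "\<forall>C\<subseteq>W. card C = s \<longrightarrow> \<not> is_clique G C" by blast
    have WW: "W \<in> Ws" unfolding Ws_def using W by simp
    have "G \<in> Ev W" unfolding Ev_def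
    proof (intro CollectI ballI notI)
      fix l assume l: "l \<in> {..<P} \<times> {..<D}" and a: "\<forall>e\<in>slots (Cset (hh W) P s l). G e"
      have "is_clique G (Cset (hh W) P s l)" by (rule clique_from_slots[OF a])
      then show False using W(3) Cset_props[OF hb[OF WW] P0 W(2)] by blast
    qed
    then show "G \<in> (\<Union>W\<in>Ws. Ev W)" using WW by blast
  qed
  have each: "measure_pmf.prob (gnp n p) (Ev W) \<le> (1 - p ^ (s^2)) ^ (P * D)" if WW: "W \<in> Ws" for W
  proof -
    have Wn: "W \<subseteq> {0..<n}" and Ps: "P * s \<le> card W" using WW unfolding Ws_def by auto
    have "measure_pmf.prob (Pi_pmf (edge_slots n) False (\<lambda>_. bernoulli_pmf p)) (Ev W)
        \<le> (1 - p ^ (s^2)) ^ card ({..<P} \<times> {..<D})"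
      unfolding Ev_def
    proof (rule prob_none_all[OF _ fin_edge_slots _ _ _ p])
      show "finite ({..<P} \<times> {..<D})" by simp
      show "\<forall>l\<in>{..<P} \<times> {..<D}. slots (Cset (hh W) P s l) \<subseteq> edge_slots n"
        using Cset_props(1)[OF hb[OF WW] P0 Ps] Wn slots_sub by (meson subset_trans)
      show "\<forall>l\<in>{..<P} \<times> {..<D}. \<forall>l'\<in>{..<P} \<times> {..<D}. l \<noteq> l' \<longrightarrow>
          slots (Cset (hh W) P s l) \<inter> slots (Cset (hh W) P s l') = {}"
        using Cset_disj[OF hb[OF WW] P0 Ps DsP] by blast
      show "\<forall>l\<in>{..<P} \<times> {..<D}. card (slots (Cset (hh W) P s l)) \<le> s^2"
      proof
        fix l
        have "finite (Cset (hh W) P s l)" unfolding Cset_def by simp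
        then show "card (slots (Cset (hh W) P s l)) \<le> s^2"
          using card_slots Cset_props(2)[OF hb[OF WW] P0 Ps] by metis
      qed
    qed
    then show ?thesis unfolding gnp_def by (simp add: card_cartesian_product)
  qed
  have "measure_pmf.prob (gnp n p) {G. \<not>(\<forall>W\<subseteq>{0..<n}. P * s \<le> card W \<longrightarrow> (\<exists>C\<subseteq>W. card C = s \<and> is_clique G C))}
      \<le> measure_pmf.prob (gnp n p) (\<Union>W\<in>Ws. Ev W)" by (rule prob_mono_le[OF incl])
  also have "\<dots> \<le> (\<Sum>W\<in>Ws. measure_pmf.prob (gnp n p) (Ev W))"
    by (rule measure_pmf.finite_measure_subadditive_finite[OF finWs]) auto
  also have "\<dots> \<le> (\<Sum>W\<in>Ws. (1 - p ^ (s^2)) ^ (P * D))" by (rule sum_mono) (rule each)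
  also have "\<dots> = real (card Ws) * (1 - p ^ (s^2)) ^ (P * D)" by simp
  also have "\<dots> \<le> 2 ^ n * (1 - p ^ (s^2)) ^ (P * D)"
  proof (rule mult_right_mono)
    show "real (card Ws) \<le> 2 ^ n" using cWs by (metis of_nat_le_iff of_nat_numeral of_nat_power)
    have "p ^ (s^2) \<le> 1" using p by (simp add: power_le_one)
    then show "0 \<le> (1 - p ^ (s^2)) ^ (P * D)" by simp
  qed
  finally show ?thesis .
qed


definition Eset :: "nat \<Rightarrow> nat \<Rightarrow> nat \<Rightarrow> nat \<Rightarrow> (nat \<times> nat) set" where
  "Eset k r r' j = slots (blk k j) \<union> (\<lambda>x. (min r x, max r x)) ` A1 k j \<union> (\<lambda>x. (min r' x, max r' x)) ` A2 k j"

lemma Eset_char: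
  assumes "1 \<le> k" "e \<in> Eset k r r' j"
  shows "(fst e \<in> blk k j \<or> snd e \<in> blk k j) \<and> fst e \<in> insert r (insert r' (blk k j))
     \<and> snd e \<in> insert r (insert r' (blk k j))"
proof -
  note ps = parts_sub[OF assms(1), of j]
  consider (a) "e \<in> slots (blk k j)" | (b) x where "x \<in> A1 k j" "e = (min r x, max r x)"
    | (c) x where "x \<in> A2 k j" "e = (min r' x, max r' x)"
    using assms(2) unfolding Eset_def by blast
  then show ?thesis
  proof cases
    case a then show ?thesis unfolding slots_def by auto
  next
    case b
    then have "x \<in> blk k j" using ps(1) by blast
    then show ?thesis using b by (auto simp: min_def max_def)
  next
    case c
    then have "x \<in> blk k j" using ps(2) by blast
    then show ?thesis using c by (auto simp: min_def max_def)
  qed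
qed

lemma Eset_disj:
  assumes "1 \<le> k" "j \<noteq> j'" "r \<notin> blk k j" "r' \<notin> blk k j" "r \<notin> blk k j'" "r' \<notin> blk k j'"
  shows "Eset k r r' j \<inter> Eset k r r' j' = {}"
proof (rule ccontr)
  assume "Eset k r r' j \<inter> Eset k r r' j' \<noteq> {}"
  then obtain e where e: "e \<in> Eset k r r' j" "e \<in> Eset k r r' j'" by blast
  note c1 = Eset_char[OF assms(1) e(1)] and c2 = Eset_char[OF assms(1) e(2)]
  have dj: "blk k j \<inter> blk k j' = {}" using blk_disj[OF assms(2)] .
  show False
  proof (cases "fst e \<in> blk k j")
    case True
    then have "fst e \<in> blk k j'" using c2 assms(3,4) by auto
    then show False using True dj by blast
  next
    case False
    then have "snd e \<in> blk k j" using c1 by blast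
    then have "snd e \<in> blk k j'" using c2 assms(3,4) by auto
    then show False using \<open>snd e \<in> blk k j\<close> dj by blast
  qed
qed

lemma Eset_card:
  assumes "1 \<le> k"
  shows "card (Eset k r r' j) \<le> (6*k)^2"
proof -
  define S where "S = insert r (insert r' (blk k j))"
  have fS: "finite S" unfolding S_def by (simp add: fin_parts)
  have "Eset k r r' j \<subseteq> S \<times> S"
  proof
    fix e assume ee: "e \<in> Eset k r r' j"
    have "fst e \<in> S \<and> snd e \<in> S" using Eset_char[OF assms ee] unfolding S_def by blast
    then show "e \<in> S \<times> S" by (cases e) auto
  qed
  then have "card (Eset k r r' j) \<le> card (S \<times> S)" using fS by (intro card_mono) auto
  also have "\<dots> = card S * card S" by (simp add: card_cartesian_product)
  also have "card S \<le> 6 * k"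
  proof -
    have "card S \<le> card (blk k j) + 2" unfolding S_def using fin_parts(4)[of k j]
      by (metis add_2_eq_Suc' card_insert_le_m1 nat_le_linear Suc_le_mono card_insert_if
          finite_insert le_SucI le_Suc_eq)
    then show ?thesis using parts_sub(11)[OF assms, of j] assms by simp
  qed
  then have "card S * card S \<le> (6*k) * (6*k)" by (intro mult_mono) auto
  finally show ?thesis by (simp add: power2_eq_square)
qed

lemma blk_in_range:
  assumes "i < Gn" "j \<in> grp g i" "Gn * g * dd k \<le> n"
  shows "blk k j \<subseteq> {0..<n}"
proof
  fix x assume x: "x \<in> blk k j"
  have "j < i * g + g" using assms(2) unfolding grp_def by simp
  also have "i * g + g = (i + 1) * g" by simp
  also have "\<dots> \<le> Gn * g" using assms(1) by (intro mult_le_mono1) simp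
  finally have "j + 1 \<le> Gn * g" by simp
  then have "(j + 1) * dd k \<le> Gn * g * dd k" by (rule mult_le_mono1)
  then show "x \<in> {0..<n}" using x assms(3) unfolding blk_def by (simp add: algebra_simps)
qed

lemma blk_sub_gv: "j \<in> grp g i \<Longrightarrow> blk k j \<subseteq> gv k g i"
  unfolding gv_def by blast

lemma fail2_bound:
  assumes p: "0 \<le> p" "p \<le> 1" and k1: "1 \<le> k" and vol: "Gn * g * dd k \<le> n"
  shows "measure_pmf.prob (gnp n p) {G. \<not> H2 G k g n Gn}
    \<le> real n * real n * real Gn * (1 - p ^ ((6*k)^2)) ^ g"
proof -
  define Idx where "Idx = {(r, r', i). r < n \<and> r' < n \<and> i < Gn \<and> r \<notin> gv k g i \<and> r' \<notin> gv k g i}"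
  define Ev where "Ev t = {G. \<forall>j\<in>grp g (snd (snd t)). \<not>(\<forall>e\<in>Eset k (fst t) (fst (snd t)) j. G e)}" for t
  have IdxS: "Idx \<subseteq> {..<n} \<times> {..<n} \<times> {..<Gn}" unfolding Idx_def by auto
  have finIdx: "finite Idx" using IdxS finite_subset by blast
  have cIdx: "card Idx \<le> n * n * Gn"
  proof -
    have "card Idx \<le> card ({..<n} \<times> {..<n} \<times> {..<Gn})" using IdxS by (intro card_mono) auto
    then show ?thesis by (simp add: card_cartesian_product)
  qed
  have incl: "{G. \<not> H2 G k g n Gn} \<subseteq> (\<Union>t\<in>Idx. Ev t)"
  proof
    fix G assume "G \<in> {G. \<not> H2 G k g n Gn}"
    then obtain r r' i where t: "r < n" "r' < n" "i < Gn" "r \<notin> gv k g i" "r' \<notin> gv k g i"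
      and no: "\<forall>j\<in>grp g i. \<not>(is_clique G (blk k j) \<and> (\<forall>x\<in>A1 k j. adj G r x) \<and> (\<forall>x\<in>A2 k j. adj G r' x))"
      unfolding H2_def by blast
    have "G \<in> Ev (r, r', i)" unfolding Ev_def
    proof (intro CollectI ballI notI)
      fix j assume j: "j \<in> grp g (snd (snd (r, r', i)))" and a: "\<forall>e\<in>Eset k (fst (r, r', i)) (fst (snd (r, r', i))) j. G e"
      have j': "j \<in> grp g i" using j by simp
      have a': "\<forall>e\<in>Eset k r r' j. G e" using a by simp
      have rb: "r \<notin> blk k j" "r' \<notin> blk k j" using t(4,5) blk_sub_gv[OF j'] by blast+
      have "is_clique G (blk k j)" using a' unfolding Eset_def by (intro clique_from_slots) blast
      moreover have "adj G r x" if x: "x \<in> A1 k j" for x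
      proof -
        have "x \<noteq> r" using x rb parts_sub(1)[OF k1] by blast
        moreover have "G (min r x, max r x)" using a' x unfolding Eset_def by blast
        ultimately show ?thesis unfolding adj_def by simp
      qed
      moreover have "adj G r' x" if x: "x \<in> A2 k j" for x
      proof -
        have "x \<noteq> r'" using x rb parts_sub(2)[OF k1] by blast
        moreover have "G (min r' x, max r' x)" using a' x unfolding Eset_def by blast
        ultimately show ?thesis unfolding adj_def by simp
      qed
      ultimately show False using no j' by blast
    qed
    moreover have "(r, r', i) \<in> Idx" unfolding Idx_def using t by simp
    ultimately show "G \<in> (\<Union>t\<in>Idx. Ev t)" by blast
  qed
  have each: "measure_pmf.prob (gnp n p) (Ev t) \<le> (1 - p ^ ((6*k)^2)) ^ g" if tI: "t \<in> Idx" for t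
  proof -
    obtain r r' i where tt: "t = (r, r', i)" by (cases t) auto
    have t: "r < n" "r' < n" "i < Gn" "r \<notin> gv k g i" "r' \<notin> gv k g i" using tI unfolding Idx_def tt by auto
    have "measure_pmf.prob (Pi_pmf (edge_slots n) False (\<lambda>_. bernoulli_pmf p)) (Ev t)
        \<le> (1 - p ^ ((6*k)^2)) ^ card (grp g i)"
      unfolding Ev_def tt fst_conv snd_conv
    proof (rule prob_none_all[OF _ fin_edge_slots _ _ _ p])
      show "finite (grp g i)" unfolding grp_def by simp
      show "\<forall>j\<in>grp g i. Eset k r r' j \<subseteq> edge_slots n"
      proof (intro ballI subsetI)
        fix j e assume j: "j \<in> grp g i" and e: "e \<in> Eset k r r' j"
        have bn: "blk k j \<subseteq> {0..<n}" by (rule blk_in_range[OF t(3) j vol])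
        have rb: "r \<notin> blk k j" "r' \<notin> blk k j" using t(4,5) blk_sub_gv[OF j] by blast+
        consider (a) "e \<in> slots (blk k j)" | (b) x where "x \<in> A1 k j" "e = (min r x, max r x)"
          | (c) x where "x \<in> A2 k j" "e = (min r' x, max r' x)"
          using e unfolding Eset_def by blast
        then show "e \<in> edge_slots n"
        proof cases
          case a then show ?thesis using slots_sub[OF bn] by blast
        next
          case b
          then have "x \<in> blk k j" using parts_sub(1)[OF k1] by blast
          then have "x < n" "x \<noteq> r" using bn rb by auto
          then show ?thesis using b t(1) unfolding edge_slots_def by (auto simp: min_def max_def)
        next
          case c
          then have "x \<in> blk k j" using parts_sub(2)[OF k1] by blast
          then have "x < n" "x \<noteq> r'" using bn rb by auto
          then show ?thesis using c t(2) unfolding edge_slots_def by (auto simp: min_def max_def)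
        qed
      qed
      show "\<forall>j\<in>grp g i. \<forall>j'\<in>grp g i. j \<noteq> j' \<longrightarrow> Eset k r r' j \<inter> Eset k r r' j' = {}"
      proof (intro ballI impI)
        fix j j' assume "j \<in> grp g i" "j' \<in> grp g i" "j \<noteq> j'"
        then show "Eset k r r' j \<inter> Eset k r r' j' = {}"
          using Eset_disj[OF k1] t(4,5) blk_sub_gv by blast
      qed
      show "\<forall>j\<in>grp g i. card (Eset k r r' j) \<le> (6*k)^2" using Eset_card[OF k1] by blast
    qed
    moreover have "card (grp g i) = g" unfolding grp_def by simp
    ultimately show ?thesis unfolding gnp_def by simp
  qed
  have "measure_pmf.prob (gnp n p) {G. \<not> H2 G k g n Gn} \<le> measure_pmf.prob (gnp n p) (\<Union>t\<in>Idx. Ev t)"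
    by (rule prob_mono_le[OF incl])
  also have "\<dots> \<le> (\<Sum>t\<in>Idx. measure_pmf.prob (gnp n p) (Ev t))"
    by (rule measure_pmf.finite_measure_subadditive_finite[OF finIdx]) auto
  also have "\<dots> \<le> (\<Sum>t\<in>Idx. (1 - p ^ ((6*k)^2)) ^ g)" by (rule sum_mono) (rule each)
  also have "\<dots> = real (card Idx) * (1 - p ^ ((6*k)^2)) ^ g" by simp
  also have "\<dots> \<le> real n * real n * real Gn * (1 - p ^ ((6*k)^2)) ^ g"
  proof (rule mult_right_mono)
    show "real (card Idx) \<le> real n * real n * real Gn" using cIdx by (metis of_nat_le_iff of_nat_mult)
    have "p ^ ((6*k)^2) \<le> 1" using p by (simp add: power_le_one)
    then show "0 \<le> (1 - p ^ ((6*k)^2)) ^ g" by simp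
  qed
  finally show ?thesis .
qed


lemma per_n:
  assumes p: "0 \<le> p" "p \<le> 1" and k1: "1 \<le> k" and m1: "1 \<le> m"
    and vol: "(2*k*m^11*(2*k) + 3) * m^4 * dd k \<le> n"
  shows "1 - (2 ^ n * (1 - p ^ ((2*k)^2)) ^ (2*k*m^11 * m^11)
            + real n * real n * real (2*k*m^11*(2*k) + 3) * (1 - p ^ ((6*k)^2)) ^ (m^4))
    \<le> measure_pmf.prob (gnp n p) {G. \<exists>F. goodfam G (2*k) (6*k) F {0..<n}}"
proof -
  define P where "P = 2*k*m^11"
  define D where "D = m^11"
  define Gn where "Gn = P * (2*k) + 3"
  have P0: "0 < P" unfolding P_def using k1 m1 by simp
  have DsP: "D * (2*k) \<le> P" unfolding P_def D_def by simp
  let ?S = "{G. \<exists>F. goodfam G (2*k) (6*k) F {0..<n}}"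
  let ?F1 = "{G. \<not>(\<forall>W\<subseteq>{0..<n}. P * (2*k) \<le> card W \<longrightarrow> (\<exists>C\<subseteq>W. card C = 2*k \<and> is_clique G C))}"
  let ?F2 = "{G. \<not> H2 G k (m^4) n Gn}"
  have incl: "UNIV - ?S \<subseteq> ?F1 \<union> ?F2"
  proof
    fix G assume G: "G \<in> UNIV - ?S"
    show "G \<in> ?F1 \<union> ?F2"
    proof (rule ccontr)
      assume a: "G \<notin> ?F1 \<union> ?F2"
      then have h1: "\<forall>W\<subseteq>{0..<n}. P * (2*k) \<le> card W \<longrightarrow> (\<exists>C\<subseteq>W. card C = 2*k \<and> is_clique G C)"
        by (simp only: Un_iff mem_Collect_eq de_Morgan_disj not_not) (rule conjunct1)
      have h2: "H2 G k (m^4) n Gn" using a by blast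
      have "\<exists>F. goodfam G (2*k) (6*k) F {0..<n}"
        by (rule det_main[OF k1 h1 h2]) (use vol in \<open>simp_all add: Gn_def P_def\<close>)
      then show False using G by blast
    qed
  qed
  have f1: "measure_pmf.prob (gnp n p) ?F1 \<le> 2 ^ n * (1 - p ^ ((2*k)^2)) ^ (P * D)"
    by (rule fail1_bound[OF p P0 DsP])
  have f2: "measure_pmf.prob (gnp n p) ?F2 \<le> real n * real n * real Gn * (1 - p ^ ((6*k)^2)) ^ (m^4)"
    by (rule fail2_bound[OF p k1]) (use vol in \<open>simp add: Gn_def P_def\<close>)
  have "measure_pmf.prob (gnp n p) (UNIV - ?S) \<le> measure_pmf.prob (gnp n p) (?F1 \<union> ?F2)"
    by (rule prob_mono_le[OF incl])
  also have "\<dots> \<le> measure_pmf.prob (gnp n p) ?F1 + measure_pmf.prob (gnp n p) ?F2"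
    by (rule measure_Un_le) auto
  finally have "measure_pmf.prob (gnp n p) (UNIV - ?S) \<le> 2 ^ n * (1 - p ^ ((2*k)^2)) ^ (P * D)
      + real n * real n * real Gn * (1 - p ^ ((6*k)^2)) ^ (m^4)" using f1 f2 by linarith
  moreover have "measure_pmf.prob (gnp n p) (UNIV - ?S) = 1 - measure_pmf.prob (gnp n p) ?S"
    using measure_pmf.prob_compl[of ?S "gnp n p"] by simp
  ultimately show ?thesis unfolding P_def D_def Gn_def by simp
qed


lemma one_minus_pow_exp:
  fixes y :: real assumes "0 \<le> y" "y \<le> 1"
  shows "(1 - y) ^ N \<le> exp (- (y * real N))"
proof -
  have "1 - y \<le> exp (- y)" using exp_ge_add_one_self[of "-y"] by simp
  then have "(1 - y) ^ N \<le> exp (- y) ^ N" using assms by (intro power_mono) auto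
  also have "\<dots> = exp (- (y * real N))" by (simp add: exp_of_nat_mult[symmetric] algebra_simps)
  finally show ?thesis .
qed

lemma floor_half:
  fixes y :: real assumes "1 \<le> y"
  shows "y / 2 \<le> real (nat \<lfloor>y\<rfloor>)" "real (nat \<lfloor>y\<rfloor>) \<le> y" "1 \<le> nat \<lfloor>y\<rfloor>"
proof -
  have f0: "1 \<le> \<lfloor>y\<rfloor>" using assms by linarith
  have r: "real (nat \<lfloor>y\<rfloor>) = real_of_int \<lfloor>y\<rfloor>" using f0 by simp
  show "real (nat \<lfloor>y\<rfloor>) \<le> y" using r by linarith
  show "1 \<le> nat \<lfloor>y\<rfloor>" using f0 by linarith
  show "y / 2 \<le> real (nat \<lfloor>y\<rfloor>)" using r
  proof (cases "y < 2")
    case True then show ?thesis using f0 r by linarith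
  next
    case False then show ?thesis using r by linarith
  qed
qed

lemma ceil_bounds:
  fixes L :: real assumes "1 \<le> L"
  shows "L \<le> real (nat \<lceil>L\<rceil>)" "real (nat \<lceil>L\<rceil>) \<le> L + 1" "1 \<le> nat \<lceil>L\<rceil>"
proof -
  have c0: "1 \<le> \<lceil>L\<rceil>" using assms by linarith
  have r: "real (nat \<lceil>L\<rceil>) = real_of_int \<lceil>L\<rceil>" using c0 by simp
  show "L \<le> real (nat \<lceil>L\<rceil>)" using r by linarith
  show "real (nat \<lceil>L\<rceil>) \<le> L + 1" using r by linarith
  show "1 \<le> nat \<lceil>L\<rceil>" using c0 by linarith
qed

definition Qset :: "real \<Rightarrow> real \<Rightarrow> nat \<Rightarrow> (nat \<times> nat \<Rightarrow> bool) set" where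
  "Qset c1 c2 n = {G. \<exists>Vs. is_partition n Vs \<and>
              (\<forall>i<length Vs.
                 is_clique G (Vs ! i) \<and>
                 c1 * ln (real n) powr (1/3) \<le> real (card (Vs ! i)) \<and>
                 real (card (Vs ! i)) \<le> c2 * ln (real n) powr (1/3) \<and>
                 (i < length Vs - 1 \<longrightarrow> even (card (Vs ! i))))}"

lemma bound_at_n:
  fixes p :: real and n :: nat and L y :: real
  assumes p: "0 < p" "p \<le> 1"
    and Ld: "L = ln (real n) powr (1/3)" and yd: "y = real n powr (1/20)"
    and L1: "1 \<le> L" and LC: "14400 * (- ln p) \<le> L" and n2: "2 \<le> real n"
    and volr: "(4*(L+1)^2 * y^11 + 3) * y^4 * (6*(L+1)) \<le> real n"
  shows "1 - (exp (real n * ln 2 - real n powr (-1/100) * (y/2)^22)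
              + real n ^ 3 * exp (- (real n powr (-1/100) * (y/2)^4)))
     \<le> measure_pmf.prob (gnp n p) (Qset 1 12 n)"
proof -
  define k where "k = nat \<lceil>L\<rceil>"
  define m where "m = nat \<lfloor>y\<rfloor>"
  have npos: "0 < real n" using n2 by simp
  have y1: "1 \<le> y" unfolding yd using n2 by (intro ge_one_powr_ge_zero) auto
  note kb = ceil_bounds[OF L1, folded k_def]
  note mb = floor_half[OF y1, folded m_def]
  have k1: "1 \<le> k" using kb(3) .
  have m1: "1 \<le> m" using mb(3) .
  have ddr: "real (dd k) = 6 * real k - 2" unfolding dd_def using k1 by simp
  have vol: "(2*k*m^11*(2*k) + 3) * m^4 * dd k \<le> n"
  proof -
    have "real ((2*k*m^11*(2*k) + 3) * m^4 * dd k) = (4 * real k ^ 2 * real m ^ 11 + 3) * real m ^ 4 * (6 * real k - 2)"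
      by (simp only: of_nat_mult of_nat_add of_nat_power of_nat_numeral ddr) (simp add: power2_eq_square algebra_simps)
    also have "\<dots> \<le> (4*(L+1)^2 * y^11 + 3) * y^4 * (6*(L+1))"
    proof -
      have a: "4 * real k ^ 2 * real m ^ 11 \<le> 4 * (L + 1)\<^sup>2 * y ^ 11"
      proof -
        have "real k ^ 2 \<le> (L+1)^2" using kb by (intro power_mono) auto
        moreover have "real m ^ 11 \<le> y ^ 11" using mb by (intro power_mono) auto
        ultimately show ?thesis by (intro mult_mono) auto
      qed
      have b: "real m ^ 4 \<le> y ^ 4" using mb by (intro power_mono) auto
      have c: "6 * real k - 2 \<le> 6 * (L + 1)" using kb by simp
      have c0: "0 \<le> 6 * real k - 2" using k1 by simp
      have ab: "(4 * real k ^ 2 * real m ^ 11 + 3) * real m ^ 4 \<le> (4*(L+1)^2 * y^11 + 3) * y^4"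
        using a b y1 by (intro mult_mono) auto
      show ?thesis by (rule mult_mono[OF ab c]) (use y1 L1 c0 in auto)
    qed
    also have "\<dots> \<le> real n" by (rule volr)
    finally show ?thesis by (simp only: of_nat_le_iff)
  qed
  have main: "1 - (2 ^ n * (1 - p ^ ((2*k)^2)) ^ (2*k*m^11 * m^11)
            + real n * real n * real (2*k*m^11*(2*k) + 3) * (1 - p ^ ((6*k)^2)) ^ (m^4))
    \<le> measure_pmf.prob (gnp n p) {G. \<exists>F. goodfam G (2*k) (6*k) F {0..<n}}"
    by (rule per_n[OF _ p(2) k1 m1 vol]) (use p in simp)
  have sub: "{G. \<exists>F. goodfam G (2*k) (6*k) F {0..<n}} \<subseteq> Qset 1 12 n"
  proof
    fix G assume "G \<in> {G. \<exists>F. goodfam G (2*k) (6*k) F {0..<n}}"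
    then obtain F where "goodfam G (2*k) (6*k) F {0..<n}" by blast
    from fam_to_list[OF this] obtain Vs where Vs: "is_partition n Vs"
      "\<forall>i<length Vs. is_clique G (Vs!i) \<and> 2*k \<le> card (Vs!i) \<and> card (Vs!i) \<le> 6*k \<and> (i < length Vs - 1 \<longrightarrow> even (card (Vs!i)))"
      by blast
    have "\<forall>i<length Vs.
                 is_clique G (Vs ! i) \<and>
                 1 * ln (real n) powr (1/3) \<le> real (card (Vs ! i)) \<and>
                 real (card (Vs ! i)) \<le> 12 * ln (real n) powr (1/3) \<and>
                 (i < length Vs - 1 \<longrightarrow> even (card (Vs ! i)))"
    proof (intro allI impI conjI)
      fix i assume i: "i < length Vs"
      have c: "2 * real k \<le> real (card (Vs!i))" "real (card (Vs!i)) \<le> 6 * real k"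
        using Vs(2) i by (metis of_nat_le_iff of_nat_mult of_nat_numeral)+
      show "is_clique G (Vs ! i)" using Vs(2) i by blast
      show "1 * ln (real n) powr (1/3) \<le> real (card (Vs ! i))" using c kb L1 unfolding Ld by linarith
      show "real (card (Vs ! i)) \<le> 12 * ln (real n) powr (1/3)" using c kb L1 unfolding Ld by linarith
      assume "i < length Vs - 1"
      then show "even (card (Vs ! i))" using Vs(2) i by blast
    qed
    then show "G \<in> Qset 1 12 n" unfolding Qset_def using Vs(1) by blast
  qed
  have Qge: "measure_pmf.prob (gnp n p) {G. \<exists>F. goodfam G (2*k) (6*k) F {0..<n}} \<le> measure_pmf.prob (gnp n p) (Qset 1 12 n)"
    by (rule prob_mono_le[OF sub])
  define x where "x = p ^ ((6*k)^2)"
  have lnn: "0 < ln (real n)" using n2 by simp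
  have L3: "L ^ 3 = ln (real n)"
    unfolding Ld using lnn by (simp add: powr_realpow[symmetric] powr_powr)
  have xlow: "real n powr (-1/100) \<le> x"
  proof -
    have xe: "x = exp (real ((6*k)^2) * ln p)" unfolding x_def using p(1)
      by (simp add: powr_realpow[symmetric] powr_def)
    have lp: "ln p \<le> 0" using p by simp
    have "real ((6*k)^2) = 36 * real k ^ 2" by (simp add: power2_eq_square)
    also have "\<dots> \<le> 36 * (L+1)^2" using kb by (intro mult_left_mono power_mono) auto
    also have "\<dots> \<le> 144 * L^2" 
    proof -
      have "L \<le> L * L" using L1 by (metis mult_le_cancel_left1 order_trans zero_le_one less_le_trans zero_less_one not_le mult.commute mult_right_mono mult_1_left)
      moreover have "36*(L+1)^2 = 36*(L*L) + 72*L + 36" by (simp add: power2_eq_square algebra_simps)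
      moreover have "144*L^2 = 144*(L*L)" by (simp add: power2_eq_square)
      ultimately show ?thesis using L1 by linarith
    qed
    finally have N: "real ((6*k)^2) \<le> 144 * L^2" .
    have "144 * L^2 * ln p \<le> real ((6*k)^2) * ln p" by (rule mult_right_mono_neg[OF N lp])
    moreover have "- (L^3 / 100) \<le> 144 * L^2 * ln p"
    proof -
      have "144 * L^2 * (- ln p) \<le> 144 * L^2 * (L / 14400)" using LC L1 by (intro mult_left_mono) auto
      then show ?thesis by (simp add: power3_eq_cube power2_eq_square algebra_simps)
    qed
    ultimately have "- (L^3 / 100) \<le> real ((6*k)^2) * ln p" by linarith
    then have "- (ln (real n) / 100) \<le> real ((6*k)^2) * ln p" by (simp only: L3)
    then have "exp (- (ln (real n) / 100)) \<le> x" unfolding xe by simp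
    moreover have "real n powr (-1/100) = exp (- (ln (real n) / 100))" using npos by (simp add: powr_def)
    ultimately show ?thesis by simp
  qed
  have x01: "0 \<le> x" "x \<le> 1" unfolding x_def using p by (auto simp: power_le_one)
  have px: "x \<le> p ^ ((2*k)^2)" unfolding x_def using p by (intro power_decreasing) (auto simp: power2_eq_square)
  have p2: "p ^ ((2*k)^2) \<le> 1" using p by (simp add: power_le_one)
  have A1: "2 ^ n * (1 - p ^ ((2*k)^2)) ^ (2*k*m^11 * m^11) \<le> exp (real n * ln 2 - real n powr (-1/100) * (y/2)^22)"
  proof -
    have "(1 - p ^ ((2*k)^2)) ^ (2*k*m^11 * m^11) \<le> (1 - x) ^ (2*k*m^11 * m^11)"
      using px p2 by (intro power_mono) auto
    also have "\<dots> \<le> exp (- (x * real (2*k*m^11 * m^11)))" by (rule one_minus_pow_exp[OF x01])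
    also have "\<dots> \<le> exp (- (real n powr (-1/100) * (y/2)^22))"
    proof -
      have "(y/2)^22 \<le> real m ^ 22" using mb y1 by (intro power_mono) auto
      also have "\<dots> \<le> real (2*k*m^11 * m^11)"
      proof -
        have "m^22 = 1 * (m^11 * m^11)" by (simp add: power_add[symmetric])
        also have "\<dots> \<le> (2*k) * (m^11 * m^11)" using k1 by (intro mult_right_mono) auto
        finally have "m^22 \<le> 2*k*m^11 * m^11" by (simp add: mult.assoc)
        then show ?thesis by (metis of_nat_le_iff of_nat_power)
      qed
      finally have "real n powr (-1/100) * (y/2)^22 \<le> x * real (2*k*m^11 * m^11)"
        using xlow x01 by (intro mult_mono) auto
      then show ?thesis by simp
    qed
    finally have "(1 - p ^ ((2*k)^2)) ^ (2*k*m^11 * m^11) \<le> exp (- (real n powr (-1/100) * (y/2)^22))" .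
    then have h: "2 ^ n * (1 - p ^ ((2*k)^2)) ^ (2*k*m^11 * m^11) \<le> 2 ^ n * exp (- (real n powr (-1/100) * (y/2)^22))"
      by (intro mult_left_mono) auto
    have e2: "(2::real) ^ n = exp (real n * ln 2)" by (subst exp_of_nat_mult) simp
    have e3: "exp (real n * ln 2) * exp (- (real n powr (-1/100) * (y/2)^22)) = exp (real n * ln 2 - real n powr (-1/100) * (y/2)^22)"
      by (simp add: exp_add[symmetric])
    have "2 ^ n * exp (- (real n powr (-1/100) * (y/2)^22)) = exp (real n * ln 2 - real n powr (-1/100) * (y/2)^22)"
      using e2 e3 by simp
    then show ?thesis using h by linarith
  qed
  have A2: "real n * real n * real (2*k*m^11*(2*k) + 3) * (1 - p ^ ((6*k)^2)) ^ (m^4) \<le> real n ^ 3 * exp (- (real n powr (-1/100) * (y/2)^4))"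
  proof -
    have Gn: "real (2*k*m^11*(2*k) + 3) \<le> real n"
    proof -
      have "1 \<le> m^4 * dd k" using m1 k1 unfolding dd_def by simp
      then have "(2*k*m^11*(2*k) + 3) \<le> (2*k*m^11*(2*k) + 3) * (m^4 * dd k)" by simp
      also have "\<dots> \<le> n" using vol by (simp add: mult.assoc)
      finally show ?thesis by (simp only: of_nat_le_iff)
    qed
    have "(1 - p ^ ((6*k)^2)) ^ (m^4) \<le> exp (- (x * real (m^4)))" unfolding x_def[symmetric]
      by (rule one_minus_pow_exp[OF x01])
    also have "\<dots> \<le> exp (- (real n powr (-1/100) * (y/2)^4))"
    proof -
      have "(y/2)^4 \<le> real m ^ 4" using mb y1 by (intro power_mono) auto
      then have "real n powr (-1/100) * (y/2)^4 \<le> x * real (m^4)"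
        using xlow x01 by (intro mult_mono) auto
      then show ?thesis by simp
    qed
    finally have e: "(1 - p ^ ((6*k)^2)) ^ (m^4) \<le> exp (- (real n powr (-1/100) * (y/2)^4))" .
    have nn: "real n * real n * real (2*k*m^11*(2*k) + 3) \<le> real n ^ 3"
      using Gn npos by (simp add: power3_eq_cube mult_left_mono)
    have "0 \<le> (1 - p ^ ((6*k)^2)) ^ (m^4)" using x01 unfolding x_def by simp
    then show ?thesis using mult_mono[OF nn e] by simp
  qed
  show ?thesis using main Qge A1 A2 by linarith
qed

theorem theorem2p1:
  fixes p :: real
  assumes "0 < p" and "p \<le> 1"
  shows "\<exists>c1 c2 :: real. 0 < c1 \<and> 0 < c2 \<and>
    ((\<lambda>n. measure_pmf.prob (gnp n p)
        {G. \<exists>Vs. is_partition n Vs \<and>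
              (\<forall>i<length Vs.
                 is_clique G (Vs ! i) \<and>
                 c1 * ln (real n) powr (1/3) \<le> real (card (Vs ! i)) \<and>
                 real (card (Vs ! i)) \<le> c2 * ln (real n) powr (1/3) \<and>
                 (i < length Vs - 1 \<longrightarrow> even (card (Vs ! i))))})
     \<longlonglongrightarrow> 1)"
proof -
  define B where "B n = exp (real n * ln 2 - real n powr (-1/100) * (real n powr (1/20) / 2)^22)
      + real n ^ 3 * exp (- (real n powr (-1/100) * (real n powr (1/20) / 2)^4))" for n :: nat
  have B0: "B \<longlonglongrightarrow> 0" unfolding B_def by real_asymp
  have Llim: "filterlim (\<lambda>n::nat. ln (real n) powr (1/3)) at_top sequentially" by real_asymp
  have evL: "eventually (\<lambda>n::nat. max 1 (14400 * (- ln p)) \<le> ln (real n) powr (1/3)) sequentially"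
    using Llim unfolding filterlim_at_top by blast
  have evV: "eventually (\<lambda>n::nat. (4*(ln (real n) powr (1/3)+1)^2 * (real n powr (1/20))^11 + 3)
      * (real n powr (1/20))^4 * (6*(ln (real n) powr (1/3)+1)) \<le> real n) sequentially"
    by real_asymp
  have evN: "eventually (\<lambda>n::nat. 2 \<le> real n) sequentially" by real_asymp
  have ev: "eventually (\<lambda>n. 1 - B n \<le> measure_pmf.prob (gnp n p) (Qset 1 12 n)) sequentially"
    using evL evV evN
  proof eventually_elim
    case (elim n)
    show ?case unfolding B_def
      by (rule bound_at_n[OF assms refl refl]) (use elim in auto)
  qed
  have ev2: "eventually (\<lambda>n. measure_pmf.prob (gnp n p) (Qset 1 12 n) \<le> 1) sequentially"
    by (simp add: measure_pmf.prob_le_1)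
  have "(\<lambda>n. 1 - B n) \<longlonglongrightarrow> 1 - 0" by (intro tendsto_intros B0)
  then have "(\<lambda>n. measure_pmf.prob (gnp n p) (Qset 1 12 n)) \<longlonglongrightarrow> 1"
    using tendsto_sandwich[OF ev ev2] by simp
  then have "(\<lambda>n. measure_pmf.prob (gnp n p)
        {G. \<exists>Vs. is_partition n Vs \<and>
              (\<forall>i<length Vs.
                 is_clique G (Vs ! i) \<and>
                 1 * ln (real n) powr (1/3) \<le> real (card (Vs ! i)) \<and>
                 real (card (Vs ! i)) \<le> 12 * ln (real n) powr (1/3) \<and>
                 (i < length Vs - 1 \<longrightarrow> even (card (Vs ! i))))})
     \<longlonglongrightarrow> 1" unfolding Qset_def .
  then show ?thesis by (intro exI[of _ "1::real"] exI[of _ "12::real"]) simp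
qed


end
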